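(* Let $k\ge 2$ be an even integer. For every constant $\epsilon>0$, no deterministic online algorithm is $(1-\frac{2}{k+2}+\epsilon)$-competitive for the maximum-cardinality online bipartite matching problem under vertex arrivals with a hard budget of $k$ reassignments per arrival. That is, for every deterministic online algorithm for this problem and every constant $c\ge 0$, there exists an instance on which the final matching output by the algorithm has cardinality strictly less than $(1-\frac{2}{k+2}+\epsilon)\cdot\mathsf{OPT}-c$, where $\mathsf{OPT}$ is the maximum cardinality of a matching in the full graph.
   Context: Problem: There is a bipartite graph $G=(L\cup R,E)$. The algorithm initially knows only $R$ and the budget $k$. Over $|L|$ timesteps, the vertices of $L$ arrive one at a time; when a vertex arrives, all its incident edges are revealed. At the end of each timestep the algorithm must output a matching in the graph revealed so far. The new matching $M_2$ must be obtainable from the previous matching $M_1$ (the empty matching before the first timestep) by at most $k$ (re)assignments, where the number of (re)assignments is the number of vertices having nonzero degree in $M_1\triangle M_2$. Once a vertex is matched it must remain matched at all later timesteps. An algorithm is $\alpha$-competitive if there is a constant $c\ge 0$ such that on every instance the cardinality of its final matching is at least $\alpha\cdot\mathsf{OPT}-c$. *)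

theory Defs
  imports Complex_Main
begin

text \<open>The left vertices arrive
in order; the i-th arriving left vertex (i = 0,1,...) is identified with the index i and
is described by its neighbourhood, a subset of R.\<close>

type_synonym graph = "nat set list"
type_synonym matching = "(nat \<times> nat) set"

definition edges :: "graph \<Rightarrow> (nat \<times> nat) set" where
  "edges ns = {(i, r). i < length ns \<and> r \<in> ns ! i}"

definition is_matching :: "graph \<Rightarrow> matching \<Rightarrow> bool" where
  "is_matching ns M \<longleftrightarrow> M \<subseteq> edges ns \<and>
     (\<forall>(i, r) \<in> M. \<forall>(j, s) \<in> M. (i = j \<longleftrightarrow> r = s))"

definition OPT :: "graph \<Rightarrow> nat" where
  "OPT ns = Max {card M | M. is_matching ns M}"

definition covered :: "(nat \<times> nat) set \<Rightarrow> (nat + nat) set" where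
  "covered S = {Inl i | i r. (i, r) \<in> S} \<union> {Inr r | i r. (i, r) \<in> S}"

definition reassignments :: "matching \<Rightarrow> matching \<Rightarrow> nat" where
  "reassignments M1 M2 = card (covered ((M1 - M2) \<union> (M2 - M1)))"

text \<open>A deterministic online algorithm is a function A: given the right side R and the
sequence of neighbourhoods of the left vertices that have arrived so far, it outputs its
current matching.\<close>
type_synonym algorithm = "nat set \<Rightarrow> graph \<Rightarrow> matching"

definition alg_out :: "algorithm \<Rightarrow> nat set \<Rightarrow> graph \<Rightarrow> matching" where
  "alg_out A R ns = (if ns = [] then {} else A R ns)"

definition valid_instance :: "nat set \<Rightarrow> graph \<Rightarrow> bool" where
  "valid_instance R ns \<longleftrightarrow> finite R \<and> (\<forall>N \<in> set ns. N \<subseteq> R)"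

definition valid_algorithm :: "nat \<Rightarrow> algorithm \<Rightarrow> bool" where
  "valid_algorithm k A \<longleftrightarrow>
     (\<forall>R ns N. valid_instance R ns \<longrightarrow> N \<subseteq> R \<longrightarrow>
        (let M1 = alg_out A R ns; M2 = A R (ns @ [N]) in
           is_matching (ns @ [N]) M2 \<and>
           reassignments M1 M2 \<le> k \<and>
           covered M1 \<subseteq> covered M2))"

end

theory Submission
  imports Defs
begin


lemma covered_Inl: "Inl x \<in> covered S \<longleftrightarrow> (\<exists>r. (x, r) \<in> S)"
  by (auto simp: covered_def)
lemma covered_Inr: "Inr r \<in> covered S \<longleftrightarrow> (\<exists>x. (x, r) \<in> S)"
  by (auto simp: covered_def)
lemma covered_eq: "covered S = Inl ` fst ` S \<union> Inr ` snd ` S"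
  unfolding covered_def
  apply (rule equalityI)
   apply (auto simp: image_iff)
   apply (metis fst_conv)
  apply (metis snd_conv)
  done
lemma finite_covered: "finite S \<Longrightarrow> finite (covered S)"
  by (simp add: covered_eq)
lemma edges_iff: "(a, r) \<in> edges ns \<longleftrightarrow> a < length ns \<and> r \<in> ns ! a"
  by (simp add: edges_def)
lemma matchingD: "is_matching ns M \<Longrightarrow> (a, r) \<in> M \<Longrightarrow> (a, s) \<in> M \<Longrightarrow> r = s"
  unfolding is_matching_def by fast
lemma matchingD2: "is_matching ns M \<Longrightarrow> (a, r) \<in> M \<Longrightarrow> (b, r) \<in> M \<Longrightarrow> a = b"
  unfolding is_matching_def by fast
lemma matching_edge: "is_matching ns M \<Longrightarrow> (a, r) \<in> M \<Longrightarrow> a < length ns \<and> r \<in> ns ! a"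
  unfolding is_matching_def edges_def by blast

definition nbr_ok :: "graph \<Rightarrow> nat list \<Rightarrow> nat list \<Rightarrow> bool" where
  "nbr_ok ns rs us \<longleftrightarrow> (\<forall>a q. a < length ns \<longrightarrow> q < length rs \<longrightarrow> rs ! q \<in> ns ! a \<longrightarrow>
      (\<exists>p<length us. a = us ! p \<and> (p = q \<or> Suc p = q)))"

lemma up:
  assumes M: "is_matching ns M"
    and path: "\<forall>p<m. ns ! (us ! p) = {rs ! p, rs ! Suc p}"
    and cov: "\<forall>p<m. Inl (us ! p) \<in> covered M"
    and r0: "Inr (rs ! 0) \<notin> covered M"
    and du: "distinct us" "m \<le> length us"
  shows "\<forall>p<m. (us ! p, rs ! Suc p) \<in> M"
proof -
  have "p < m \<Longrightarrow> (us ! p, rs ! Suc p) \<in> M" for p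
  proof (induction p)
    case 0
    from cov 0 obtain r where r: "(us ! 0, r) \<in> M" by (auto simp: covered_Inl)
    then have "r \<in> ns ! (us ! 0)" using M matching_edge by blast
    with path 0 have "r = rs ! 0 \<or> r = rs ! 1" by auto
    with r r0 show ?case by (auto simp: covered_Inr)
  next
    case (Suc p)
    from cov Suc.prems obtain r where r: "(us ! Suc p, r) \<in> M" by (auto simp: covered_Inl)
    then have "r \<in> ns ! (us ! Suc p)" using M matching_edge by blast
    with path Suc.prems have "r = rs ! Suc p \<or> r = rs ! Suc (Suc p)" by auto
    moreover have prev: "(us ! p, rs ! Suc p) \<in> M" using Suc by simp
    moreover have "us ! p \<noteq> us ! Suc p" using du Suc.prems by (simp add: nth_eq_iff_index_eq)
    ultimately show ?case using r matchingD2[OF M] by blast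
  qed
  then show ?thesis by blast
qed

lemma up2:
  assumes M: "is_matching ns M"
    and nbr: "nbr_ok ns rs us"
    and start: "(us ! 0, rs ! 0) \<in> M"
    and covr: "\<forall>q. 1 \<le> q \<and> q \<le> n \<longrightarrow> Inr (rs ! q) \<in> covered M"
    and n: "n < length us" "length us \<le> length rs"
    and dr: "distinct rs"
  shows "\<forall>p\<le>n. (us ! p, rs ! p) \<in> M"
proof -
  have "p \<le> n \<Longrightarrow> (us ! p, rs ! p) \<in> M" for p
  proof (induction p)
    case 0
    then show ?case using start by simp
  next
    case (Suc p)
    from covr Suc.prems obtain a where a: "(a, rs ! Suc p) \<in> M" by (auto simp: covered_Inr)
    then have an: "a < length ns" "rs ! Suc p \<in> ns ! a" using M matching_edge by blast+
    have sl: "Suc p < length rs" using Suc.prems n by simp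
    from nbr[unfolded nbr_ok_def, rule_format, OF an(1) sl an(2)]
    obtain p' where p': "p' < length us" "a = us ! p'" "p' = Suc p \<or> Suc p' = Suc p" by blast
    have prev: "(us ! p, rs ! p) \<in> M" using Suc by simp
    have "rs ! p \<noteq> rs ! Suc p" using dr Suc.prems n by (simp add: nth_eq_iff_index_eq)
    then have "p' \<noteq> p" using prev a p' matchingD[OF M] by blast
    then show ?case using p' a by auto
  qed
  then show ?thesis by blast
qed

lemma down:
  assumes M: "is_matching ns M"
    and path: "\<forall>p<n. ns ! (us ! p) = {rs ! p, rs ! Suc p}"
    and cov: "\<forall>p<n. Inl (us ! p) \<in> covered M"
    and top: "(us ! n, rs ! n) \<in> M"
    and du: "distinct us" "n < length us"
  shows "\<forall>p\<le>n. (us ! p, rs ! p) \<in> M"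
proof -
  have "d \<le> n \<Longrightarrow> (us ! (n - d), rs ! (n - d)) \<in> M" for d
  proof (induction d)
    case 0
    then show ?case using top by simp
  next
    case (Suc d)
    define p where "p = n - Suc d"
    have pn: "p < n" "Suc p = n - d" using Suc.prems by (auto simp: p_def)
    from cov pn obtain r where r: "(us ! p, r) \<in> M" by (auto simp: covered_Inl)
    then have "r \<in> ns ! (us ! p)" using M matching_edge by blast
    with path pn have "r = rs ! p \<or> r = rs ! Suc p" by auto
    moreover have nx: "(us ! Suc p, rs ! Suc p) \<in> M" using Suc pn by simp
    moreover have "us ! p \<noteq> us ! Suc p" using du pn by (simp add: nth_eq_iff_index_eq)
    ultimately have "r = rs ! p" using r matchingD2[OF M] by blast
    then show ?case using r p_def by simp
  qed
  from this[of "n - p" for p] show ?thesis by (metis diff_diff_cancel diff_le_self)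
qed



lemma closed_step:
  assumes M2: "is_matching ns' M2"
    and fin: "finite M1" "finite M2"
    and mono: "covered M1 \<subseteq> covered M2"
    and budget: "reassignments M1 M2 \<le> 2*l"
    and len: "length rs = Suc l" "length us = Suc l"
    and dist: "distinct rs" "distinct us"
    and path: "\<forall>p<l. ns' ! (us ! p) = {rs ! p, rs ! Suc p}"
    and trap: "ns' ! (us ! l) = {rs ! l}"
    and nbr: "nbr_ok ns' rs us"
    and can1: "\<forall>p<l. (us ! p, rs ! Suc p) \<in> M1"
    and can2: "Inl (us ! l) \<notin> covered M1"
    and can3: "Inr (rs ! 0) \<notin> covered M1"
  shows "(\<forall>p<l. (us ! p, rs ! Suc p) \<in> M2) \<and> Inl (us ! l) \<notin> covered M2 \<and> Inr (rs ! 0) \<notin> covered M2"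
proof -
  have covu: "\<forall>p<l. Inl (us ! p) \<in> covered M2"
  proof (intro allI impI)
    fix p assume "p < l"
    then have "Inl (us ! p) \<in> covered M1" using can1 by (auto simp: covered_Inl)
    then show "Inl (us ! p) \<in> covered M2" using mono by blast
  qed
  have tfree: "Inl (us ! l) \<notin> covered M2"
  proof
    assume "Inl (us ! l) \<in> covered M2"
    then obtain s where s: "(us ! l, s) \<in> M2" by (auto simp: covered_Inl)
    then have "s \<in> ns' ! (us ! l)" using M2 matching_edge by blast
    with trap have ss: "s = rs ! l" by simp
    have D: "\<forall>p\<le>l. (us ! p, rs ! p) \<in> M2"
      using down[OF M2 path covu _ dist(2)] s ss len by simp
    define S where "S = (M1 - M2) \<union> (M2 - M1)"
    have finS: "finite (covered S)" using fin by (simp add: S_def finite_covered)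
    have A1: "Inl (us ! p) \<in> covered S \<and> Inr (rs ! Suc p) \<in> covered S" if p: "p < l" for p
    proof -
      have e1: "(us ! p, rs ! Suc p) \<in> M1" using can1 p by simp
      have e2: "(us ! p, rs ! p) \<in> M2" using D p by simp
      have "rs ! p \<noteq> rs ! Suc p" using dist len p by (simp add: nth_eq_iff_index_eq)
      then have "(us ! p, rs ! Suc p) \<notin> M2" using e2 matchingD[OF M2] by blast
      then have "(us ! p, rs ! Suc p) \<in> S" using e1 by (simp add: S_def)
      then show ?thesis by (auto simp: covered_Inl covered_Inr)
    qed
    have A2: "Inl (us ! l) \<in> covered S \<and> Inr (rs ! l) \<in> covered S"
    proof -
      have "(us ! l, rs ! l) \<notin> M1" using can2 by (auto simp: covered_Inl)
      then have "(us ! l, rs ! l) \<in> S" using s ss by (simp add: S_def)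
      then show ?thesis by (auto simp: covered_Inl covered_Inr)
    qed
    have A3: "Inr (rs ! 0) \<in> covered S"
    proof -
      have "(us ! 0, rs ! 0) \<notin> M1" using can3 by (auto simp: covered_Inr)
      moreover have "(us ! 0, rs ! 0) \<in> M2" using D by simp
      ultimately have "(us ! 0, rs ! 0) \<in> S" by (simp add: S_def)
      then show ?thesis by (auto simp: covered_Inl covered_Inr)
    qed
    have sub: "Inl ` set us \<union> Inr ` set rs \<subseteq> covered S"
    proof
      fix x assume "x \<in> Inl ` set us \<union> Inr ` set rs"
      then consider (L) p where "p < Suc l" "x = Inl (us ! p)" | (R) q where "q < Suc l" "x = Inr (rs ! q)"
        using len by (auto simp: in_set_conv_nth)
      then show "x \<in> covered S"
      proof cases
        case L
        then show ?thesis using A1 A2 by (cases "p = l") auto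
      next
        case R
        then show ?thesis using A1 A3 by (cases q) auto
      qed
    qed
    have "card (Inl ` set us \<union> Inr ` set rs) = card (set us) + card (set rs)"
      by (subst card_Un_disjoint) (auto simp: card_image)
    also have "\<dots> = 2 * Suc l" using dist len by (simp add: distinct_card)
    finally have "2 * Suc l \<le> card (covered S)" using card_mono[OF finS sub] by simp
    moreover have "card (covered S) \<le> 2 * l" using budget by (simp add: reassignments_def S_def)
    ultimately show False by simp
  qed
  have r0free: "Inr (rs ! 0) \<notin> covered M2"
  proof
    assume "Inr (rs ! 0) \<in> covered M2"
    then obtain a where a: "(a, rs ! 0) \<in> M2" by (auto simp: covered_Inr)
    then have an: "a < length ns'" "rs ! 0 \<in> ns' ! a" using M2 matching_edge by blast+
    from nbr[unfolded nbr_ok_def, rule_format, OF an(1) _ an(2)] len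
    obtain p where "p < length us" "a = us ! p" "p = 0 \<or> Suc p = 0" by auto
    then have a0: "a = us ! 0" by simp
    have covr: "\<forall>q. 1 \<le> q \<and> q \<le> l \<longrightarrow> Inr (rs ! q) \<in> covered M2"
    proof (intro allI impI)
      fix q assume q: "1 \<le> q \<and> q \<le> l"
      then obtain p where "q = Suc p" "p < l" by (cases q) auto
      then have "Inr (rs ! q) \<in> covered M1" using can1 by (auto simp: covered_Inr)
      then show "Inr (rs ! q) \<in> covered M2" using mono by blast
    qed
    have "\<forall>p\<le>l. (us ! p, rs ! p) \<in> M2"
      using up2[OF M2 nbr _ covr] a a0 len dist by simp
    then have "(us ! l, rs ! l) \<in> M2" by simp
    then show False using tfree by (auto simp: covered_Inl)
  qed
  have "\<forall>p<l. (us ! p, rs ! Suc p) \<in> M2"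
    using up[OF M2 path covu r0free dist(2)] len by simp
  then show ?thesis using tfree r0free by simp
qed

definition orient :: "matching \<Rightarrow> nat list \<Rightarrow> nat list \<Rightarrow> nat list \<times> nat list" where
  "orient M rs us = (if Inr (hd rs) \<in> covered M then (rev rs, rev us) else (rs, us))"

lemma orient_ready:
  assumes M: "is_matching ns M"
    and len: "length rs = Suc m" "length us = m" "0 < m"
    and dist: "distinct rs" "distinct us"
    and path: "\<forall>p<m. ns ! (us ! p) = {rs ! p, rs ! Suc p}"
    and nbr: "nbr_ok ns rs us"
    and ready: "\<forall>p<m. Inl (us ! p) \<in> covered M"
    and interior: "\<forall>q. 0 < q \<and> q < m \<longrightarrow> Inr (rs ! q) \<in> covered M"
    and o: "orient M rs us = (rs', us')"
  shows "length rs' = Suc m \<and> length us' = m \<and> set rs' = set rs \<and> set us' = set us \<and>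
    distinct rs' \<and> distinct us' \<and> (\<forall>p<m. ns ! (us' ! p) = {rs' ! p, rs' ! Suc p}) \<and>
    Inr (rs' ! 0) \<notin> covered M \<and> (\<forall>p<m. (us' ! p, rs' ! Suc p) \<in> M)"
proof (cases "Inr (hd rs) \<in> covered M")
  case True
  have hd: "hd rs = rs ! 0" using len by (cases rs) auto
  have rs': "rs' = rev rs" "us' = rev us" using o True by (auto simp: orient_def)
  from True hd obtain a where a: "(a, rs ! 0) \<in> M" by (auto simp: covered_Inr)
  then have an: "a < length ns" "rs ! 0 \<in> ns ! a" using M matching_edge by blast+
  from nbr[unfolded nbr_ok_def, rule_format, OF an(1) _ an(2)] len
  obtain p where "p < length us" "a = us ! p" "p = 0 \<or> Suc p = 0" by auto
  then have a0: "a = us ! 0" by simp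
  have covr: "\<forall>q. 1 \<le> q \<and> q \<le> m - 1 \<longrightarrow> Inr (rs ! q) \<in> covered M"
    using interior by auto
  have E: "\<forall>p\<le>m - 1. (us ! p, rs ! p) \<in> M"
    using up2[OF M nbr _ covr] a a0 len dist by simp
  have lastfree: "Inr (rs ! m) \<notin> covered M"
  proof
    assume "Inr (rs ! m) \<in> covered M"
    then obtain b where b: "(b, rs ! m) \<in> M" by (auto simp: covered_Inr)
    then have bn: "b < length ns" "rs ! m \<in> ns ! b" using M matching_edge by blast+
    from nbr[unfolded nbr_ok_def, rule_format, OF bn(1) _ bn(2)] len
    obtain p where p: "p < length us" "b = us ! p" "p = m \<or> Suc p = m" by auto
    then have pm: "p = m - 1" using len by auto
    have "(us ! (m - 1), rs ! (m - 1)) \<in> M" using E by simp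
    then have "rs ! m = rs ! (m - 1)" using b p(2) pm matchingD[OF M] by simp
    then show False using dist len by (simp add: nth_eq_iff_index_eq)
  qed
  have r0: "rev rs ! 0 = rs ! m" using len by (simp add: rev_nth)
  have rv: "rev us ! p = us ! (m - Suc p) \<and> rev rs ! p = rs ! (m - p) \<and> rev rs ! Suc p = rs ! (m - Suc p)"
    if "p < m" for p using that len by (simp add: rev_nth)
  have P: "\<forall>p<m. ns ! (rev us ! p) = {rev rs ! p, rev rs ! Suc p}"
  proof (intro allI impI)
    fix p assume p: "p < m"
    have "ns ! (us ! (m - Suc p)) = {rs ! (m - Suc p), rs ! Suc (m - Suc p)}" using path p by simp
    moreover have "Suc (m - Suc p) = m - p" using p by simp
    ultimately show "ns ! (rev us ! p) = {rev rs ! p, rev rs ! Suc p}" using rv[OF p] by auto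
  qed
  have C: "\<forall>p<m. (rev us ! p, rev rs ! Suc p) \<in> M"
    using rv E by simp
  show ?thesis using rs' len dist P C r0 lastfree by simp
next
  case False
  have hd: "hd rs = rs ! 0" using len by (cases rs) auto
  have rs': "rs' = rs" "us' = us" using o False by (auto simp: orient_def)
  have "\<forall>p<m. (us ! p, rs ! Suc p) \<in> M"
    using up[OF M path ready _ dist(2)] False hd len by simp
  then show ?thesis using rs' len dist path False hd by simp
qed



type_synonym gadget = "nat list \<times> nat list \<times> bool"

definition RS :: "gadget \<Rightarrow> nat list" where "RS g = fst g"
definition US :: "gadget \<Rightarrow> nat list" where "US g = fst (snd g)"
definition CL :: "gadget \<Rightarrow> bool" where "CL g = snd (snd g)"
lemma proj_simps[simp]: "RS (rs, us, c) = rs" "US (rs, us, c) = us" "CL (rs, us, c) = c"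
  by (simp_all add: RS_def US_def CL_def)

definition gstruct :: "nat \<Rightarrow> nat \<Rightarrow> graph \<Rightarrow> gadget \<Rightarrow> bool" where
  "gstruct l t ns g \<longleftrightarrow> 0 < length (US g) \<and> distinct (US g) \<and> distinct (RS g) \<and>
     set (RS g) \<subseteq> {..<2*t} \<and> set (US g) \<subseteq> {..<t} \<and>
     (if CL g then length (RS g) = Suc l \<and> length (US g) = Suc l \<and>
        (\<forall>p<l. ns ! (US g ! p) = {RS g ! p, RS g ! Suc p}) \<and> ns ! (US g ! l) = {RS g ! l}
      else length (RS g) = Suc (length (US g)) \<and> length (US g) \<le> l \<and>
        (\<forall>p<length (US g). ns ! (US g ! p) = {RS g ! p, RS g ! Suc p}))"

definition sinv :: "nat \<Rightarrow> nat \<Rightarrow> graph \<Rightarrow> gadget list \<Rightarrow> bool" where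
  "sinv l t ns gs \<longleftrightarrow> length ns = t \<and> (\<forall>N\<in>set ns. N \<subseteq> {..<2*t}) \<and>
     (\<forall>j<length gs. gstruct l t ns (gs ! j)) \<and>
     (\<forall>i<length gs. \<forall>j<length gs. i \<noteq> j \<longrightarrow>
        set (US (gs ! i)) \<inter> set (US (gs ! j)) = {} \<and> set (RS (gs ! i)) \<inter> set (RS (gs ! j)) = {}) \<and>
     (\<Union>j<length gs. set (US (gs ! j))) = {..<t} \<and> length gs \<le> t"

definition gprop :: "nat \<Rightarrow> matching \<Rightarrow> gadget \<Rightarrow> bool" where
  "gprop l M g \<longleftrightarrow>
     (\<not> CL g \<longrightarrow> (\<forall>q. 0 < q \<and> q < length (US g) \<longrightarrow> Inr (RS g ! q) \<in> covered M)) \<and>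
     (CL g \<longrightarrow> (\<forall>p<l. (US g ! p, RS g ! Suc p) \<in> M) \<and> Inl (US g ! l) \<notin> covered M \<and> Inr (RS g ! 0) \<notin> covered M)"

definition minv :: "nat \<Rightarrow> graph \<Rightarrow> gadget list \<Rightarrow> matching \<Rightarrow> bool" where
  "minv l ns gs M \<longleftrightarrow> is_matching ns M \<and> (\<forall>j<length gs. gprop l M (gs ! j))"

lemma gstruct_sub:
  assumes g: "gstruct l t ns g" and p: "p < length (US g)"
  shows "ns ! (US g ! p) \<subseteq> set (RS g) \<and> RS g ! p \<in> ns ! (US g ! p)"
proof (cases "CL g")
  case True
  then have L: "length (RS g) = Suc l" "length (US g) = Suc l"
    and P: "\<forall>p<l. ns ! (US g ! p) = {RS g ! p, RS g ! Suc p}" and T: "ns ! (US g ! l) = {RS g ! l}"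
    using g by (simp_all add: gstruct_def)
  show ?thesis
  proof (cases "p = l")
    case True then show ?thesis using T L by simp
  next
    case False then have "p < l" using p L by simp
    then show ?thesis using P L by simp
  qed
next
  case False
  then have L: "length (RS g) = Suc (length (US g))"
    and P: "\<forall>p<length (US g). ns ! (US g ! p) = {RS g ! p, RS g ! Suc p}"
    using g by (simp_all add: gstruct_def)
  then show ?thesis using p by simp
qed

lemma sinv_nbr:
  assumes S: "sinv l t ns gs" and j: "j < length gs"
  shows "nbr_ok ns (RS (gs ! j)) (US (gs ! j))"
  unfolding nbr_ok_def
proof (intro allI impI)
  fix a q assume a: "a < length ns" and q: "q < length (RS (gs ! j))" and r: "RS (gs ! j) ! q \<in> ns ! a"
  from S a have "a \<in> (\<Union>j<length gs. set (US (gs ! j)))" by (simp add: sinv_def)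
  then obtain h where h: "h < length gs" "a \<in> set (US (gs ! h))" by auto
  then obtain p where p: "p < length (US (gs ! h))" "a = US (gs ! h) ! p" by (auto simp: in_set_conv_nth)
  have gh: "gstruct l t ns (gs ! h)" using S h by (simp add: sinv_def)
  have gj: "gstruct l t ns (gs ! j)" using S j by (simp add: sinv_def)
  have "ns ! a \<subseteq> set (RS (gs ! h))" using gstruct_sub[OF gh p(1)] p by simp
  with r have "RS (gs ! j) ! q \<in> set (RS (gs ! h))" by blast
  moreover have "RS (gs ! j) ! q \<in> set (RS (gs ! j))" using q by simp
  ultimately have hj: "h = j" using S h j unfolding sinv_def by blast
  let ?rs = "RS (gs ! j)" and ?us = "US (gs ! j)"
  have dr: "distinct ?rs" using gj by (simp add: gstruct_def)
  have pl: "p < length ?us" and ap: "a = ?us ! p" using p hj by auto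
  show "\<exists>p<length ?us. a = ?us ! p \<and> (p = q \<or> Suc p = q)"
  proof (cases "CL (gs ! j)")
    case True
    then have L: "length ?rs = Suc l" "length ?us = Suc l" using gj by (simp_all add: gstruct_def)
    show ?thesis
    proof (cases "p = l")
      case True
      then have "ns ! a = {?rs ! l}" using gj `CL (gs ! j)` ap by (simp add: gstruct_def)
      then have "?rs ! q = ?rs ! l" using r by simp
      then have "q = l" using dr q L by (simp add: nth_eq_iff_index_eq)
      then show ?thesis using pl ap True by blast
    next
      case False
      then have pl': "p < l" using pl L by simp
      then have "ns ! a = {?rs ! p, ?rs ! Suc p}" using gj `CL (gs ! j)` ap by (simp add: gstruct_def)
      then have "?rs ! q = ?rs ! p \<or> ?rs ! q = ?rs ! Suc p" using r by simp
      then have "q = p \<or> q = Suc p" using dr q L pl' by (auto simp: nth_eq_iff_index_eq)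
      then show ?thesis using pl ap by blast
    qed
  next
    case False
    then have L: "length ?rs = Suc (length ?us)" using gj by (simp add: gstruct_def)
    have "ns ! a = {?rs ! p, ?rs ! Suc p}" using gj False ap pl by (simp add: gstruct_def)
    then have "?rs ! q = ?rs ! p \<or> ?rs ! q = ?rs ! Suc p" using r by simp
    then have "q = p \<or> q = Suc p" using dr q L pl by (auto simp: nth_eq_iff_index_eq)
    then show ?thesis using pl ap by blast
  qed
qed

lemma gstruct_mono:
  assumes "gstruct l t ns g" "length ns = t"
  shows "gstruct l (Suc t) (ns @ [N]) g"
proof -
  have lt: "\<forall>p<length (US g). US g ! p < t" using assms(1) unfolding gstruct_def
    by (meson lessThan_iff nth_mem subsetD)
  have "\<forall>p<length (US g). (ns @ [N]) ! (US g ! p) = ns ! (US g ! p)"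
    using lt assms(2) by (simp add: nth_append)
  then show ?thesis using assms(1) unfolding gstruct_def
    by (auto simp: Let_def split: if_splits)
qed



lemma finite_edges:
  assumes "\<forall>N\<in>set ns. finite N"
  shows "finite (edges ns)"
proof -
  have "edges ns \<subseteq> {..<length ns} \<times> \<Union>(set ns)"
    apply (auto simp: edges_def)
    using nth_mem by blast
  moreover have "finite ({..<length ns} \<times> \<Union>(set ns))" using assms by auto
  ultimately show ?thesis using finite_subset by blast
qed

lemma matching_finite:
  assumes "is_matching ns M" "\<forall>N\<in>set ns. finite N"
  shows "finite M"
  using assms finite_edges finite_subset unfolding is_matching_def by blast

lemma sinv_gstruct: "sinv l t ns gs \<Longrightarrow> j < length gs \<Longrightarrow> gstruct l t ns (gs ! j)"
  by (simp add: sinv_def)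

lemma sinv_update:
  assumes S: "sinv l t ns gs" and i: "i < length gs"
    and g': "gstruct l (Suc t) (ns @ [N]) g'" and N: "N \<subseteq> {..<2*Suc t}"
    and U: "set (US g') = insert t (set (US (gs ! i)))"
    and Rr: "set (RS g') \<subseteq> insert (2*t) (set (RS (gs ! i)))"
  shows "sinv l (Suc t) (ns @ [N]) (gs[i := g'])"
proof -
  have lt: "length ns = t" using S by (simp add: sinv_def)
  have sU: "\<forall>j<length gs. set (US (gs ! j)) \<subseteq> {..<t} \<and> set (RS (gs ! j)) \<subseteq> {..<2*t}"
    using S by (simp add: sinv_def gstruct_def)
  have dis: "\<forall>a<length gs. \<forall>b<length gs. a \<noteq> b \<longrightarrow>
        set (US (gs ! a)) \<inter> set (US (gs ! b)) = {} \<and> set (RS (gs ! a)) \<inter> set (RS (gs ! b)) = {}"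
    using S by (simp add: sinv_def)
  have un: "(\<Union>j<length gs. set (US (gs ! j))) = {..<t}" using S by (simp add: sinv_def)
  have A1: "\<forall>N'\<in>set (ns @ [N]). N' \<subseteq> {..<2 * Suc t}"
  proof
    fix N' assume "N' \<in> set (ns @ [N])"
    then have "N' \<in> set ns \<or> N' = N" by auto
    then show "N' \<subseteq> {..<2 * Suc t}"
    proof
      assume "N' \<in> set ns"
      then have "N' \<subseteq> {..<2*t}" using S by (simp add: sinv_def)
      then show ?thesis by (rule subset_trans) auto
    next
      assume "N' = N" then show ?thesis using N by simp
    qed
  qed
  have A2: "\<forall>j<length (gs[i := g']). gstruct l (Suc t) (ns @ [N]) (gs[i := g'] ! j)"
  proof (intro allI impI)
    fix j assume j: "j < length (gs[i := g'])"
    show "gstruct l (Suc t) (ns @ [N]) (gs[i := g'] ! j)"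
    proof (cases "j = i")
      case True then show ?thesis using g' i by simp
    next
      case False then show ?thesis using gstruct_mono[OF sinv_gstruct[OF S] lt] j by simp
    qed
  qed
  have A3: "\<forall>a<length (gs[i := g']). \<forall>b<length (gs[i := g']). a \<noteq> b \<longrightarrow>
        set (US (gs[i := g'] ! a)) \<inter> set (US (gs[i := g'] ! b)) = {} \<and>
        set (RS (gs[i := g'] ! a)) \<inter> set (RS (gs[i := g'] ! b)) = {}"
  proof (intro allI impI)
    fix a b assume a: "a < length (gs[i := g'])" and b: "b < length (gs[i := g'])" and ab: "a \<noteq> b"
    have a': "a < length gs" and b': "b < length gs" using a b by simp_all
    have d: "set (US (gs ! a)) \<inter> set (US (gs ! b)) = {}" "set (RS (gs ! a)) \<inter> set (RS (gs ! b)) = {}"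
      using dis a' b' ab by auto
    have ta: "t \<notin> set (US (gs ! a))" "2*t \<notin> set (RS (gs ! a))" using sU a' by auto
    have tb: "t \<notin> set (US (gs ! b))" "2*t \<notin> set (RS (gs ! b))" using sU b' by auto
    show "set (US (gs[i := g'] ! a)) \<inter> set (US (gs[i := g'] ! b)) = {} \<and>
        set (RS (gs[i := g'] ! a)) \<inter> set (RS (gs[i := g'] ! b)) = {}"
    proof (cases "a = i")
      case True
      then have "b \<noteq> i" using ab by simp
      then show ?thesis using True d U Rr ta tb i a' b' by (auto simp: nth_list_update)
    next
      case False
      note aF = False
      show ?thesis
      proof (cases "b = i")
        case True
        then show ?thesis using aF d U Rr ta tb i a' b' by (auto simp: nth_list_update)
      next
        case False
        then show ?thesis using aF d by (simp add: nth_list_update)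
      qed
    qed
  qed
  have A4: "(\<Union>j<length (gs[i := g']). set (US (gs[i := g'] ! j))) = {..<Suc t}"
  proof -
    have "(\<Union>j<length (gs[i := g']). set (US (gs[i := g'] ! j))) =
          insert t (\<Union>j<length gs. set (US (gs ! j)))"
    proof
      show "(\<Union>j<length (gs[i := g']). set (US (gs[i := g'] ! j))) \<subseteq> insert t (\<Union>j<length gs. set (US (gs ! j)))"
        using U i by (auto simp: nth_list_update split: if_splits)
      show "insert t (\<Union>j<length gs. set (US (gs ! j))) \<subseteq> (\<Union>j<length (gs[i := g']). set (US (gs[i := g'] ! j)))"
      proof
        fix x assume x: "x \<in> insert t (\<Union>j<length gs. set (US (gs ! j)))"
        show "x \<in> (\<Union>j<length (gs[i := g']). set (US (gs[i := g'] ! j)))"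
        proof (cases "x = t \<or> x \<in> set (US (gs ! i))")
          case True
          then have "x \<in> set (US (gs[i := g'] ! i))" using U i by auto
          moreover have "i < length (gs[i := g'])" using i by simp
          ultimately show ?thesis by blast
        next
          case False
          then obtain j where j: "j < length gs" "x \<in> set (US (gs ! j))" using x by auto
          then have "j \<noteq> i" using False by auto
          then have "x \<in> set (US (gs[i := g'] ! j))" using j by simp
          then show ?thesis using j by auto
        qed
      qed
    qed
    then show ?thesis using un by auto
  qed
  show ?thesis unfolding sinv_def using A1 A2 A3 A4 lt S by (simp add: sinv_def)
qed

lemma sinv_append:
  assumes S: "sinv l t ns gs" and g: "gstruct l (Suc t) (ns @ [N]) g" and N: "N \<subseteq> {..<2*Suc t}"
    and U: "set (US g) = {t}" and Rr: "set (RS g) \<inter> {..<2*t} = {}"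
  shows "sinv l (Suc t) (ns @ [N]) (gs @ [g])"
proof -
  have lt: "length ns = t" using S by (simp add: sinv_def)
  have sU: "\<forall>j<length gs. set (US (gs ! j)) \<subseteq> {..<t} \<and> set (RS (gs ! j)) \<subseteq> {..<2*t}"
    using S by (simp add: sinv_def gstruct_def)
  have dis: "\<forall>a<length gs. \<forall>b<length gs. a \<noteq> b \<longrightarrow>
        set (US (gs ! a)) \<inter> set (US (gs ! b)) = {} \<and> set (RS (gs ! a)) \<inter> set (RS (gs ! b)) = {}"
    using S by (simp add: sinv_def)
  have un: "(\<Union>j<length gs. set (US (gs ! j))) = {..<t}" using S by (simp add: sinv_def)
  have A1: "\<forall>N'\<in>set (ns @ [N]). N' \<subseteq> {..<2 * Suc t}"
  proof
    fix N' assume "N' \<in> set (ns @ [N])"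
    then have "N' \<in> set ns \<or> N' = N" by auto
    then show "N' \<subseteq> {..<2 * Suc t}"
    proof
      assume "N' \<in> set ns"
      then have "N' \<subseteq> {..<2*t}" using S by (simp add: sinv_def)
      then show ?thesis by (rule subset_trans) auto
    next
      assume "N' = N" then show ?thesis using N by simp
    qed
  qed
  have A2: "\<forall>j<length (gs @ [g]). gstruct l (Suc t) (ns @ [N]) ((gs @ [g]) ! j)"
    using g gstruct_mono[OF sinv_gstruct[OF S] lt] by (auto simp: nth_append less_Suc_eq)
  have A3: "\<forall>a<length (gs @ [g]). \<forall>b<length (gs @ [g]). a \<noteq> b \<longrightarrow>
        set (US ((gs @ [g]) ! a)) \<inter> set (US ((gs @ [g]) ! b)) = {} \<and>
        set (RS ((gs @ [g]) ! a)) \<inter> set (RS ((gs @ [g]) ! b)) = {}"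
  proof (intro allI impI)
    fix a b assume a: "a < length (gs @ [g])" and b: "b < length (gs @ [g])" and ab: "a \<noteq> b"
    show "set (US ((gs @ [g]) ! a)) \<inter> set (US ((gs @ [g]) ! b)) = {} \<and>
        set (RS ((gs @ [g]) ! a)) \<inter> set (RS ((gs @ [g]) ! b)) = {}"
    proof (cases "a < length gs")
      case True
      note aT = True
      show ?thesis
      proof (cases "b < length gs")
        case True
        then show ?thesis using aT dis ab by (simp add: nth_append)
      next
        case False
        then have bb: "b = length gs" using b by simp
        have "set (US (gs ! a)) \<subseteq> {..<t}" "set (RS (gs ! a)) \<subseteq> {..<2*t}" using sU aT by auto
        then show ?thesis using aT bb U Rr by (auto simp: nth_append)
      qed
    next
      case False
      then have a2: "a = length gs" using a by simp
      then have bl: "b < length gs" using b ab by simp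
      have "set (US (gs ! b)) \<subseteq> {..<t}" "set (RS (gs ! b)) \<subseteq> {..<2*t}" using sU bl by auto
      then show ?thesis using a2 bl U Rr by (auto simp: nth_append)
    qed
  qed
  have A4: "(\<Union>j<length (gs @ [g]). set (US ((gs @ [g]) ! j))) = {..<Suc t}"
  proof -
    have "(\<Union>j<length (gs @ [g]). set (US ((gs @ [g]) ! j))) =
          (\<Union>j<length gs. set (US (gs ! j))) \<union> set (US g)"
      by (auto simp: nth_append lessThan_Suc)
    then show ?thesis using un U by auto
  qed
  show ?thesis unfolding sinv_def using A1 A2 A3 A4 lt S by (simp add: sinv_def)
qed

lemma gprop_step:
  assumes S': "sinv l t' ns' gs'" and j: "j < length gs'"
    and M2: "is_matching ns' M2" and fin: "finite M1" "finite M2"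
    and mono: "covered M1 \<subseteq> covered M2"
    and budget: "reassignments M1 M2 \<le> 2*l" and gp: "gprop l M1 (gs' ! j)"
  shows "gprop l M2 (gs' ! j)"
proof (cases "CL (gs' ! j)")
  case True
  have g: "gstruct l t' ns' (gs' ! j)" using S' j by (simp add: sinv_def)
  have st: "length (RS (gs' ! j)) = Suc l" "length (US (gs' ! j)) = Suc l"
    "distinct (RS (gs' ! j))" "distinct (US (gs' ! j))"
    "\<forall>p<l. ns' ! (US (gs' ! j) ! p) = {RS (gs' ! j) ! p, RS (gs' ! j) ! Suc p}"
    "ns' ! (US (gs' ! j) ! l) = {RS (gs' ! j) ! l}"
    using g True by (simp_all add: gstruct_def)
  have c: "\<forall>p<l. (US (gs' ! j) ! p, RS (gs' ! j) ! Suc p) \<in> M1"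
    "Inl (US (gs' ! j) ! l) \<notin> covered M1" "Inr (RS (gs' ! j) ! 0) \<notin> covered M1"
    using gp True by (simp_all add: gprop_def)
  have "(\<forall>p<l. (US (gs' ! j) ! p, RS (gs' ! j) ! Suc p) \<in> M2) \<and>
      Inl (US (gs' ! j) ! l) \<notin> covered M2 \<and> Inr (RS (gs' ! j) ! 0) \<notin> covered M2"
    by (rule closed_step[OF M2 fin mono budget st sinv_nbr[OF S' j] c])
  then show ?thesis using True by (simp add: gprop_def)
next
  case False
  then show ?thesis using gp mono by (auto simp: gprop_def)
qed



definition is_ready :: "matching \<Rightarrow> gadget \<Rightarrow> bool" where
  "is_ready M g \<longleftrightarrow> \<not> CL g \<and> (\<forall>u\<in>set (US g). Inl u \<in> covered M)"

definition adv_step :: "algorithm \<Rightarrow> nat set \<Rightarrow> nat \<Rightarrow> graph \<times> gadget list \<Rightarrow> graph \<times> gadget list" where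
  "adv_step A R l st = (let ns = fst st; gs = snd st; M = alg_out A R ns; t = length ns in
     if \<exists>i<length gs. is_ready M (gs ! i) then
       (let i = (LEAST i. i < length gs \<and> is_ready M (gs ! i));
            ori = orient M (RS (gs ! i)) (US (gs ! i)); rs = fst ori; us = snd ori in
        if length us = l then (ns @ [{last rs}], gs[i := (rs, us @ [t], True)])
        else (ns @ [{last rs, 2*t}], gs[i := (rs @ [2*t], us @ [t], False)]))
     else (ns @ [{2*t, Suc (2*t)}], gs @ [([2*t, Suc (2*t)], [t], False)]))"

lemma finish_step:
  assumes l: "1 \<le> l" and VA: "valid_algorithm (2*l) A" and R: "{..<2*Suc t} \<subseteq> R" "finite R"
    and S: "sinv l t ns gs" and Mi: "minv l ns gs (alg_out A R ns)"
    and N: "N \<subseteq> {..<2*Suc t}"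
    and S': "sinv l (Suc t) (ns @ [N]) gs'"
    and G: "\<forall>j<length gs'. gprop l (alg_out A R ns) (gs' ! j)"
  shows "minv l (ns @ [N]) gs' (alg_out A R (ns @ [N]))"
proof -
  let ?M1 = "alg_out A R ns" and ?M2 = "A R (ns @ [N])"
  have oldN: "\<forall>N'\<in>set ns. N' \<subseteq> {..<2*t}" using S by (simp add: sinv_def)
  have vi: "valid_instance R ns"
    unfolding valid_instance_def
  proof (intro conjI ballI)
    show "finite R" by (rule R(2))
    fix N' assume "N' \<in> set ns"
    then have "N' \<subseteq> {..<2*t}" using oldN by blast
    also have "\<dots> \<subseteq> {..<2*Suc t}" by auto
    finally show "N' \<subseteq> R" using R(1) by blast
  qed
  have NR: "N \<subseteq> R" using N R(1) by blast
  from VA[unfolded valid_algorithm_def, rule_format, OF vi NR]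
  have V: "is_matching (ns @ [N]) ?M2" "reassignments ?M1 ?M2 \<le> 2*l" "covered ?M1 \<subseteq> covered ?M2"
    by (simp_all add: Let_def)
  have eq: "alg_out A R (ns @ [N]) = ?M2" by (simp add: alg_out_def)
  have allN: "\<forall>N'\<in>set (ns @ [N]). N' \<subseteq> {..<2*Suc t}" using S' unfolding sinv_def by blast
  have finN: "\<forall>N'\<in>set (ns @ [N]). finite N'"
  proof
    fix N' assume "N' \<in> set (ns @ [N])"
    then have "N' \<subseteq> {..<2*Suc t}" using allN by blast
    then show "finite N'" using finite_subset by blast
  qed
  have finO: "\<forall>N'\<in>set ns. finite N'" using finN by simp
  have M1: "is_matching ns ?M1" using Mi by (simp add: minv_def)
  have f1: "finite ?M1" using matching_finite[OF M1 finO] .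
  have f2: "finite ?M2" using matching_finite[OF V(1) finN] .
  have "\<forall>j<length gs'. gprop l ?M2 (gs' ! j)"
    using gprop_step[OF S' _ V(1) f1 f2 V(3) V(2)] G by blast
  then show ?thesis using V(1) eq by (simp add: minv_def)
qed

lemma alg_out_edge:
  assumes "is_matching ns M" "Inl u \<in> covered M" shows "u < length ns"
  using assms matching_edge by (auto simp: covered_Inl)

lemma step_inv:
  assumes l: "1 \<le> l" and VA: "valid_algorithm (2*l) A" and R: "{..<2*Suc t} \<subseteq> R" "finite R"
    and S: "sinv l t ns gs" and Mi: "minv l ns gs (alg_out A R ns)"
    and st: "adv_step A R l (ns, gs) = (ns', gs')"
  shows "sinv l (Suc t) ns' gs' \<and> minv l ns' gs' (alg_out A R ns')"
proof -
  let ?M1 = "alg_out A R ns"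
  have lt: "length ns = t" using S by (simp add: sinv_def)
  have M1: "is_matching ns ?M1" using Mi by (simp add: minv_def)
  have sU: "\<forall>j<length gs. set (US (gs ! j)) \<subseteq> {..<t} \<and> set (RS (gs ! j)) \<subseteq> {..<2*t}"
    using S by (simp add: sinv_def gstruct_def)
  have Gold: "\<forall>j<length gs. gprop l ?M1 (gs ! j)" using Mi by (simp add: minv_def)
  show ?thesis
  proof (cases "\<exists>i<length gs. is_ready ?M1 (gs ! i)")
    case False
    let ?N = "{2*t, Suc (2*t)}" and ?g = "([2*t, Suc (2*t)], [t], False)"
    have E: "ns' = ns @ [?N]" "gs' = gs @ [?g]" using st False lt by (simp_all add: adv_step_def Let_def)
    have N: "?N \<subseteq> {..<2*Suc t}" by auto
    have g: "gstruct l (Suc t) (ns @ [?N]) ?g" using l lt by (simp add: gstruct_def nth_append)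
    have S': "sinv l (Suc t) (ns @ [?N]) (gs @ [?g])"
      by (rule sinv_append[OF S g N]) auto
    have G: "\<forall>j<length (gs @ [?g]). gprop l ?M1 ((gs @ [?g]) ! j)"
      using Gold by (auto simp: nth_append less_Suc_eq gprop_def)
    show ?thesis using E S' finish_step[OF l VA R S Mi N S' G] by simp
  next
    case True
    define i where "i = (LEAST i. i < length gs \<and> is_ready ?M1 (gs ! i))"
    have iP: "i < length gs \<and> is_ready ?M1 (gs ! i)"
      unfolding i_def using True by (rule LeastI_ex)
    then have i: "i < length gs" and rdy: "is_ready ?M1 (gs ! i)" by auto
    define rs where "rs = RS (gs ! i)"
    define us where "us = US (gs ! i)"
    define m where "m = length us"
    obtain rs' us' where o: "orient ?M1 rs us = (rs', us')" by (cases "orient ?M1 rs us")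
    have gi: "gstruct l t ns (gs ! i)" using S i by (simp add: sinv_def)
    have ncl: "\<not> CL (gs ! i)" using rdy by (simp add: is_ready_def)
    have st1: "length rs = Suc m" "m \<le> l" "0 < m" "distinct rs" "distinct us"
      "\<forall>p<m. ns ! (us ! p) = {rs ! p, rs ! Suc p}" "set us \<subseteq> {..<t}" "set rs \<subseteq> {..<2*t}"
      using gi ncl by (simp_all add: gstruct_def rs_def us_def m_def)
    have nbr: "nbr_ok ns rs us" using sinv_nbr[OF S i] by (simp add: rs_def us_def)
    have ready: "\<forall>p<m. Inl (us ! p) \<in> covered ?M1"
      using rdy by (simp add: is_ready_def us_def m_def)
    have interior: "\<forall>q. 0 < q \<and> q < m \<longrightarrow> Inr (rs ! q) \<in> covered ?M1"
      using Gold i ncl by (simp add: gprop_def rs_def us_def m_def)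
    have O: "length rs' = Suc m \<and> length us' = m \<and> set rs' = set rs \<and> set us' = set us \<and>
      distinct rs' \<and> distinct us' \<and> (\<forall>p<m. ns ! (us' ! p) = {rs' ! p, rs' ! Suc p}) \<and>
      Inr (rs' ! 0) \<notin> covered ?M1 \<and> (\<forall>p<m. (us' ! p, rs' ! Suc p) \<in> ?M1)"
      by (rule orient_ready[OF M1 st1(1) m_def[symmetric] st1(3) st1(4) st1(5) st1(6) nbr ready interior o])
    have lastr: "last rs' = rs' ! m"
    proof -
      have "rs' \<noteq> []" "length rs' = Suc m" using O by auto
      then show ?thesis by (simp add: last_conv_nth)
    qed
    have lastin: "last rs' < 2*t"
    proof -
      have "rs' \<noteq> []" using O by auto
      then have "last rs' \<in> set rs" using O last_in_set by metis
      then show ?thesis using st1 by auto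
    qed
    have tnot: "t \<notin> set us" using st1 by auto
    have tt: "2*t \<notin> set rs" using st1 by auto
    have unfold: "adv_step A R l (ns, gs) =
       (if length us' = l then (ns @ [{last rs'}], gs[i := (rs', us' @ [t], True)])
        else (ns @ [{last rs', 2*t}], gs[i := (rs' @ [2*t], us' @ [t], False)]))"
      using True o lt by (simp add: adv_step_def Let_def i_def[symmetric] rs_def[symmetric] us_def[symmetric])
    show ?thesis
    proof (cases "m = l")
      case True
      let ?N = "{last rs'}" and ?g = "(rs', us' @ [t], True)"
      have E: "ns' = ns @ [?N]" "gs' = gs[i := ?g]" using st unfold O True by simp_all
      have N: "?N \<subseteq> {..<2*Suc t}" using lastin by auto
      have nsp: "\<forall>p<m. (ns @ [?N]) ! (us' ! p) = ns ! (us' ! p)"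
      proof (intro allI impI)
        fix p assume "p < m"
        then have "us' ! p \<in> set us" using O by (metis nth_mem)
        then have "us' ! p < length ns" using st1 lt by auto
        then show "(ns @ [?N]) ! (us' ! p) = ns ! (us' ! p)" by (simp add: nth_append)
      qed
      have g: "gstruct l (Suc t) (ns @ [?N]) ?g"
        unfolding gstruct_def using O st1 True tnot nsp lt lastr
        by (auto simp: nth_append)
      have S': "sinv l (Suc t) (ns @ [?N]) (gs[i := ?g])"
        by (rule sinv_update[OF S i g N]) (use O in \<open>auto simp: us_def rs_def\<close>)
      have tfree: "Inl t \<notin> covered ?M1" using alg_out_edge[OF M1] lt by auto
      have gp: "gprop l ?M1 ?g" using O True tfree by (simp add: gprop_def nth_append)
      have G: "\<forall>j<length (gs[i := ?g]). gprop l ?M1 (gs[i := ?g] ! j)"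
        using Gold gp i by (auto simp: nth_list_update)
      show ?thesis using E S' finish_step[OF l VA R S Mi N S' G] by simp
    next
      case False
      then have ml: "m < l" using st1 by simp
      let ?N = "{last rs', 2*t}" and ?g = "(rs' @ [2*t], us' @ [t], False)"
      have E: "ns' = ns @ [?N]" "gs' = gs[i := ?g]" using st unfold O False by simp_all
      have N: "?N \<subseteq> {..<2*Suc t}" using lastin by auto
      have nsp: "\<forall>p<m. (ns @ [?N]) ! (us' ! p) = ns ! (us' ! p)"
      proof (intro allI impI)
        fix p assume "p < m"
        then have "us' ! p \<in> set us" using O by (metis nth_mem)
        then have "us' ! p < length ns" using st1 lt by auto
        then show "(ns @ [?N]) ! (us' ! p) = ns ! (us' ! p)" by (simp add: nth_append)
      qed
      have path: "\<forall>p<Suc m. (ns @ [?N]) ! ((us' @ [t]) ! p) = {(rs' @ [2*t]) ! p, (rs' @ [2*t]) ! Suc p}"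
      proof (intro allI impI)
        fix p assume p: "p < Suc m"
        show "(ns @ [?N]) ! ((us' @ [t]) ! p) = {(rs' @ [2*t]) ! p, (rs' @ [2*t]) ! Suc p}"
        proof (cases "p < m")
          case True
          then show ?thesis using nsp O by (simp add: nth_append)
        next
          case False
          then have "p = m" using p by simp
          then show ?thesis using O lt lastr by (simp add: nth_append)
        qed
      qed
      have g: "gstruct l (Suc t) (ns @ [?N]) ?g"
        unfolding gstruct_def using O st1 ml tnot tt path lt
        by auto
      have S': "sinv l (Suc t) (ns @ [?N]) (gs[i := ?g])"
        by (rule sinv_update[OF S i g N]) (use O in \<open>auto simp: us_def rs_def\<close>)
      have gp: "gprop l ?M1 ?g"
      proof -
        have "\<forall>q. 0 < q \<and> q < length (us' @ [t]) \<longrightarrow> Inr ((rs' @ [2*t]) ! q) \<in> covered ?M1"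
        proof (intro allI impI)
          fix q assume q: "0 < q \<and> q < length (us' @ [t])"
          then obtain p where p: "q = Suc p" "p < m" using O by (cases q) auto
          then have "(us' ! p, rs' ! q) \<in> ?M1" using O by simp
          then have "Inr (rs' ! q) \<in> covered ?M1" by (auto simp: covered_Inr)
          then show "Inr ((rs' @ [2*t]) ! q) \<in> covered ?M1" using p O by (simp add: nth_append)
        qed
        then show ?thesis by (simp add: gprop_def)
      qed
      have G: "\<forall>j<length (gs[i := ?g]). gprop l ?M1 (gs[i := ?g] ! j)"
        using Gold gp i by (auto simp: nth_list_update)
      show ?thesis using E S' finish_step[OF l VA R S Mi N S' G] by simp
    qed
  qed
qed



primrec adv :: "algorithm \<Rightarrow> nat set \<Rightarrow> nat \<Rightarrow> nat \<Rightarrow> graph \<times> gadget list" where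
  "adv A R l 0 = ([], [])"
| "adv A R l (Suc n) = adv_step A R l (adv A R l n)"

definition Inv :: "algorithm \<Rightarrow> nat set \<Rightarrow> nat \<Rightarrow> nat \<Rightarrow> bool" where
  "Inv A R l n \<longleftrightarrow> sinv l n (fst (adv A R l n)) (snd (adv A R l n)) \<and>
     minv l (fst (adv A R l n)) (snd (adv A R l n)) (alg_out A R (fst (adv A R l n)))"

lemma adv_inv:
  assumes l: "1 \<le> l" and VA: "valid_algorithm (2*l) A" and R: "{..<2*T} \<subseteq> R" "finite R"
  shows "n \<le> T \<Longrightarrow> Inv A R l n"
proof (induction n)
  case 0
  have "sinv l 0 [] []" by (simp add: sinv_def)
  moreover have "minv l [] [] (alg_out A R [])"
    by (simp add: minv_def alg_out_def is_matching_def)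
  ultimately show ?case by (simp add: Inv_def)
next
  case (Suc n)
  obtain ns gs where st: "adv A R l n = (ns, gs)" by (cases "adv A R l n")
  obtain ns' gs' where st': "adv_step A R l (ns, gs) = (ns', gs')" by (cases "adv_step A R l (ns, gs)")
  have IH: "Inv A R l n" using Suc by simp
  have R': "{..<2*Suc n} \<subseteq> R" using R(1) Suc.prems by auto
  have "sinv l (Suc n) ns' gs' \<and> minv l ns' gs' (alg_out A R ns')"
    using step_inv[OF l VA R' R(2) _ _ st'] IH st by (simp add: Inv_def)
  then show ?case using st st' by (simp add: Inv_def)
qed

definition wt :: "nat \<Rightarrow> gadget \<Rightarrow> nat" where
  "wt l g = (if CL g then 0 else Suc l - length (US g))"
definition W :: "nat \<Rightarrow> gadget list \<Rightarrow> nat" where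
  "W l gs = sum_list (map (wt l) gs)"

lemma sum_list_le_const:
  "(\<forall>x\<in>set xs. f x \<le> (c::nat)) \<Longrightarrow> sum_list (map f xs) \<le> length xs * c"
  by (induction xs) auto

lemma W_bound:
  assumes S: "sinv l t ns gs" shows "W l gs \<le> l * t"
proof -
  have "\<forall>g\<in>set gs. wt l g \<le> l"
  proof
    fix g assume "g \<in> set gs"
    then obtain j where j: "j < length gs" "g = gs ! j" by (auto simp: in_set_conv_nth)
    then have "gstruct l t ns g" using S by (simp add: sinv_def)
    then have "0 < length (US g)" by (simp add: gstruct_def)
    then show "wt l g \<le> l" by (simp add: wt_def; linarith)
  qed
  then have "W l gs \<le> length gs * l" unfolding W_def by (rule sum_list_le_const)
  also have "\<dots> \<le> t * l" using S by (simp add: sinv_def)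
  finally show ?thesis by (simp add: mult.commute)
qed

lemma orient_len: "orient M rs us = (rs', us') \<Longrightarrow> length us' = length us"
  by (auto simp: orient_def split: if_splits)

lemma W_ready:
  assumes S: "sinv l t ns gs" and T: "\<exists>i<length gs. is_ready (alg_out A R ns) (gs ! i)"
  shows "W l (snd (adv_step A R l (ns, gs))) + 1 = W l gs"
proof -
  let ?M1 = "alg_out A R ns"
  define i where "i = (LEAST i. i < length gs \<and> is_ready ?M1 (gs ! i))"
  have iP: "i < length gs \<and> is_ready ?M1 (gs ! i)"
    unfolding i_def using T by (rule LeastI_ex)
  then have i: "i < length gs" and rdy: "is_ready ?M1 (gs ! i)" by auto
  obtain rs' us' where o: "orient ?M1 (RS (gs ! i)) (US (gs ! i)) = (rs', us')"
    by (cases "orient ?M1 (RS (gs ! i)) (US (gs ! i))")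
  have ncl: "\<not> CL (gs ! i)" using rdy by (simp add: is_ready_def)
  have gi: "gstruct l t ns (gs ! i)" using S i by (simp add: sinv_def)
  have ml: "length (US (gs ! i)) \<le> l" using gi ncl by (simp add: gstruct_def)
  have lu: "length us' = length (US (gs ! i))" using orient_len[OF o] .
  have unfold: "adv_step A R l (ns, gs) =
       (if length us' = l then (ns @ [{last rs'}], gs[i := (rs', us' @ [length ns], True)])
        else (ns @ [{last rs', 2*length ns}], gs[i := (rs' @ [2*length ns], us' @ [length ns], False)]))"
    using T o by (simp add: adv_step_def Let_def i_def[symmetric])
  obtain g' where g': "snd (adv_step A R l (ns, gs)) = gs[i := g']" and wg: "wt l g' + 1 = wt l (gs ! i)"
  proof (cases "length us' = l")
    case True
    then show ?thesis using that[of "(rs', us' @ [length ns], True)"] unfold ncl lu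
      by (simp add: wt_def)
  next
    case False
    then show ?thesis using that[of "(rs' @ [2*length ns], us' @ [length ns], False)"] unfold ncl lu ml
      by (simp add: wt_def)
  qed
  have le: "wt l (gs ! i) \<le> W l gs"
    unfolding W_def using i elem_le_sum_list[of i "map (wt l) gs"] by simp
  have "W l (gs[i := g']) = W l gs + wt l g' - wt l (gs ! i)"
    unfolding W_def using i by (simp add: map_update sum_list_update)
  then show ?thesis using g' wg le by simp
qed

lemma W_pos:
  assumes S: "sinv l t ns gs" and T: "\<exists>i<length gs. is_ready M (gs ! i)"
  shows "1 \<le> W l gs"
proof -
  obtain i where i: "i < length gs" "is_ready M (gs ! i)" using T by blast
  have ncl: "\<not> CL (gs ! i)" using i by (simp add: is_ready_def)
  have gi: "gstruct l t ns (gs ! i)" using S i by (simp add: sinv_def)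
  have "length (US (gs ! i)) \<le> l" using gi ncl by (simp add: gstruct_def)
  then have "1 \<le> wt l (gs ! i)" using ncl by (simp add: wt_def)
  also have "\<dots> \<le> W l gs"
    unfolding W_def using i elem_le_sum_list[of i "map (wt l) gs"] by simp
  finally show ?thesis .
qed

definition quiet :: "algorithm \<Rightarrow> nat set \<Rightarrow> nat \<Rightarrow> nat \<Rightarrow> bool" where
  "quiet A R l n \<longleftrightarrow> \<not> (\<exists>i<length (snd (adv A R l n)).
      is_ready (alg_out A R (fst (adv A R l n))) (snd (adv A R l n) ! i))"

lemma quiet_exists:
  assumes inv: "\<forall>n\<le>T. Inv A R l n"
  shows "t + d \<le> T \<Longrightarrow> W l (snd (adv A R l t)) \<le> d \<Longrightarrow> \<exists>t'. t \<le> t' \<and> t' \<le> t + d \<and> quiet A R l t'"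
proof (induction d arbitrary: t)
  case 0
  have S: "sinv l t (fst (adv A R l t)) (snd (adv A R l t))" using inv 0 by (simp add: Inv_def)
  have "quiet A R l t"
    using W_pos[OF S] 0 unfolding quiet_def by force
  then show ?case by auto
next
  case (Suc d)
  show ?case
  proof (cases "quiet A R l t")
    case True then show ?thesis by auto
  next
    case False
    have S: "sinv l t (fst (adv A R l t)) (snd (adv A R l t))" using inv Suc.prems by (simp add: Inv_def)
    have "W l (snd (adv A R l (Suc t))) + 1 = W l (snd (adv A R l t))"
      using W_ready[OF S] False by (simp add: quiet_def)
    then have "W l (snd (adv A R l (Suc t))) \<le> d" using Suc.prems by simp
    moreover have "Suc t + d \<le> T" using Suc.prems by simp
    ultimately obtain t' where "Suc t \<le> t'" "t' \<le> Suc t + d" "quiet A R l t'"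
      using Suc.IH by blast
    then show ?thesis by (intro exI[of _ t']) auto
  qed
qed



lemma matching_inj: "is_matching ns M \<Longrightarrow> inj_on fst M"
  unfolding inj_on_def using matchingD by (metis prod.collapse)

lemma matchingI:
  assumes "M \<subseteq> edges ns" "\<And>a r b s. (a, r) \<in> M \<Longrightarrow> (b, s) \<in> M \<Longrightarrow> (a = b \<longleftrightarrow> r = s)"
  shows "is_matching ns M"
  using assms unfolding is_matching_def by blast

lemma set_nth_image: "(\<lambda>p. xs ! p) ` {..<length xs} = set xs"
  by (auto simp: in_set_conv_nth image_iff)

lemma final_count:
  assumes l: "1 \<le> l" and S: "sinv l t ns gs" and Mi: "minv l ns gs M"
    and Q: "\<not> (\<exists>i<length gs. is_ready M (gs ! i))"
  shows "card M * Suc l \<le> l * t" "t \<le> OPT ns"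
proof -
  let ?G = "length gs"
  let ?U = "\<lambda>j. set (US (gs ! j))"
  have lt: "length ns = t" using S by (simp add: sinv_def)
  have M: "is_matching ns M" using Mi by (simp add: minv_def)
  have gst: "\<forall>j<?G. gstruct l t ns (gs ! j)" using S by (simp add: sinv_def)
  have dis: "\<forall>a<?G. \<forall>b<?G. a \<noteq> b \<longrightarrow> ?U a \<inter> ?U b = {} \<and> set (RS (gs ! a)) \<inter> set (RS (gs ! b)) = {}"
    using S by (simp add: sinv_def)
  have un: "(\<Union>j<?G. ?U j) = {..<t}" using S by (simp add: sinv_def)
  have ct: "(\<Sum>j<?G. card (?U j)) = t"
  proof -
    have "card (\<Union>j<?G. ?U j) = (\<Sum>j<?G. card (?U j))"
      by (rule card_UN_disjoint) (use dis in auto)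
    then show ?thesis using un by simp
  qed
  have c1: "\<forall>j<?G. 1 \<le> card (?U j) \<and> card (?U j) \<le> Suc l"
  proof (intro allI impI)
    fix j assume j: "j < ?G"
    then have g: "gstruct l t ns (gs ! j)" using gst by simp
    then have "US (gs ! j) \<noteq> []" by (simp add: gstruct_def)
    then have "1 \<le> card (?U j)" by (simp add: Suc_leI card_gt_0_iff)
    moreover have "length (US (gs ! j)) \<le> Suc l" using g by (simp add: gstruct_def split: if_splits)
    then have "card (?U j) \<le> Suc l" using card_length le_trans by blast
    ultimately show "1 \<le> card (?U j) \<and> card (?U j) \<le> Suc l" by simp
  qed
  define Mo where "Mo = (\<Union>j<?G. (\<lambda>p. (US (gs ! j) ! p, RS (gs ! j) ! p)) ` {..<length (US (gs ! j))})"
  have lenle: "\<forall>j<?G. length (US (gs ! j)) \<le> length (RS (gs ! j))"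
    using gst by (auto simp: gstruct_def split: if_splits)
  have Moe: "Mo \<subseteq> edges ns"
  proof
    fix x assume "x \<in> Mo"
    then obtain j p where jp: "j < ?G" "p < length (US (gs ! j))" "x = (US (gs ! j) ! p, RS (gs ! j) ! p)"
      by (auto simp: Mo_def)
    have g: "gstruct l t ns (gs ! j)" using gst jp by simp
    have "US (gs ! j) ! p \<in> set (US (gs ! j))" using jp by simp
    then have "US (gs ! j) ! p < t" using g by (auto simp: gstruct_def)
    moreover have "RS (gs ! j) ! p \<in> ns ! (US (gs ! j) ! p)" using gstruct_sub[OF g jp(2)] by simp
    ultimately show "x \<in> edges ns" using jp lt by (simp add: edges_def)
  qed
  have Mom: "is_matching ns Mo"
  proof (rule matchingI[OF Moe])
    fix a r b s assume ar: "(a, r) \<in> Mo" and bs: "(b, s) \<in> Mo"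
    from ar obtain j p where jp: "j < ?G" "p < length (US (gs ! j))" "a = US (gs ! j) ! p" "r = RS (gs ! j) ! p"
      by (auto simp: Mo_def)
    from bs obtain h q where hq: "h < ?G" "q < length (US (gs ! h))" "b = US (gs ! h) ! q" "s = RS (gs ! h) ! q"
      by (auto simp: Mo_def)
    have dj: "distinct (US (gs ! j))" "distinct (RS (gs ! j))" using gst jp by (auto simp: gstruct_def)
    show "a = b \<longleftrightarrow> r = s"
    proof
      assume ab: "a = b"
      have "a \<in> ?U j" using jp by simp
      moreover have "b \<in> ?U h" using hq by simp
      ultimately have "a \<in> ?U j" "a \<in> ?U h" using ab by auto
      then have "j = h" using dis jp hq by blast
      then have "p = q" using ab jp hq dj by (simp add: nth_eq_iff_index_eq)
      then show "r = s" using jp hq `j = h` by simp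
    next
      assume rs: "r = s"
      have pl: "p < length (RS (gs ! j))" using jp lenle less_le_trans by blast
      have ql: "q < length (RS (gs ! h))" using hq lenle less_le_trans by blast
      have "r \<in> set (RS (gs ! j))" using pl jp by simp
      moreover have "s \<in> set (RS (gs ! h))" using ql hq by simp
      ultimately have "r \<in> set (RS (gs ! j))" "r \<in> set (RS (gs ! h))" using rs by auto
      then have "j = h" using dis jp hq by blast
      moreover have "p < length (RS (gs ! j))" "q < length (RS (gs ! j))" using jp hq lenle `j = h` by (auto intro: less_le_trans)
      ultimately have "p = q" using rs jp hq dj by (simp add: nth_eq_iff_index_eq)
      then show "a = b" using jp hq `j = h` by simp
    qed
  qed
  have fstMo: "fst ` Mo = {..<t}"
  proof -
    have "fst ` Mo = (\<Union>j<?G. (\<lambda>p. US (gs ! j) ! p) ` {..<length (US (gs ! j))})"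
      unfolding Mo_def by (simp add: image_UN image_image)
    also have "\<dots> = (\<Union>j<?G. ?U j)" by (simp add: set_nth_image)
    finally show ?thesis using un by simp
  qed
  have cMo: "card Mo = t"
    using card_image[OF matching_inj[OF Mom]] fstMo by simp
  have finE: "finite (edges ns)"
  proof (rule finite_edges, intro ballI)
    fix N assume "N \<in> set ns"
    then have "N \<subseteq> {..<2*t}" using S by (simp add: sinv_def)
    then show "finite N" using finite_subset by blast
  qed
  have finC: "finite {card M' | M'. is_matching ns M'}"
  proof -
    have "{card M' | M'. is_matching ns M'} \<subseteq> card ` Pow (edges ns)"
      by (auto simp: is_matching_def)
    then show ?thesis using finE finite_subset by blast
  qed
  have "card Mo \<le> OPT ns" unfolding OPT_def
    by (rule Max_ge[OF finC]) (use Mom in blast)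
  then show "t \<le> OPT ns" using cMo by simp
  have w: "\<forall>j\<in>{..<?G}. \<exists>w. w \<in> ?U j \<and> Inl w \<notin> covered M"
  proof
    fix j assume "j \<in> {..<?G}"
    then have j: "j < ?G" by simp
    have g: "gstruct l t ns (gs ! j)" using gst j by simp
    show "\<exists>w. w \<in> ?U j \<and> Inl w \<notin> covered M"
    proof (cases "CL (gs ! j)")
      case True
      then have "length (US (gs ! j)) = Suc l" using g by (simp add: gstruct_def)
      moreover have "Inl (US (gs ! j) ! l) \<notin> covered M" using Mi j True by (simp add: minv_def gprop_def)
      ultimately show ?thesis by (intro exI[of _ "US (gs ! j) ! l"]) simp
    next
      case False
      then show ?thesis using Q j by (auto simp: is_ready_def)
    qed
  qed
  then obtain wf where wf: "\<forall>j\<in>{..<?G}. wf j \<in> ?U j \<and> Inl (wf j) \<notin> covered M"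
    by (metis bchoice)
  have sub: "fst ` M \<subseteq> (\<Union>j<?G. ?U j - {wf j})"
  proof
    fix a assume "a \<in> fst ` M"
    then obtain r where ar: "(a, r) \<in> M" by auto
    then have "a < t" using matching_edge[OF M] lt by auto
    then obtain j where j: "j < ?G" "a \<in> ?U j" using un by auto
    have "Inl a \<in> covered M" using ar by (auto simp: covered_Inl)
    then have "a \<noteq> wf j" using wf j by auto
    then show "a \<in> (\<Union>j<?G. ?U j - {wf j})" using j by auto
  qed
  have "card M = card (fst ` M)" using card_image[OF matching_inj[OF M]] by simp
  also have "\<dots> \<le> card (\<Union>j<?G. ?U j - {wf j})" by (rule card_mono) (use sub in auto)
  also have "\<dots> \<le> (\<Sum>j<?G. card (?U j - {wf j}))" by (rule card_UN_le) simp
  also have "\<dots> = (\<Sum>j<?G. card (?U j) - 1)"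
    by (rule sum.cong) (use wf in auto)
  finally have h0: "card M \<le> (\<Sum>j<?G. card (?U j) - 1)" .
  have "(\<Sum>j<?G. card (?U j) - 1) + ?G = (\<Sum>j<?G. card (?U j))"
  proof -
    have "(\<Sum>j<?G. card (?U j) - 1) + ?G = (\<Sum>j<?G. (card (?U j) - 1) + 1)"
      by (simp only: sum.distrib) simp
    also have "\<dots> = (\<Sum>j<?G. card (?U j))" by (rule sum.cong) (use c1 in auto)
    finally show ?thesis .
  qed
  then have h1: "card M + ?G \<le> t" using h0 ct by simp
  have "(\<Sum>j<?G. card (?U j)) \<le> (\<Sum>j<?G. Suc l)" by (rule sum_mono) (use c1 in auto)
  then have h2: "t \<le> ?G * Suc l" using ct by simp
  have "card M * Suc l + ?G * Suc l \<le> t * Suc l" using h1 by (metis add_mult_distrib mult_le_mono1)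
  then have "card M * Suc l + t \<le> t * l + t" using h2 by simp
  then show "card M * Suc l \<le> l * t" by (simp add: mult.commute)
qed



theorem theorem2:
  fixes k :: nat and \<epsilon> :: real and A :: algorithm and c :: real
  assumes "k \<ge> 2" and "even k" and "\<epsilon> > 0"
    and "valid_algorithm k A" and "c \<ge> 0"
  shows "\<exists>R ns. valid_instance R ns \<and>
           real (card (alg_out A R ns))
             < (1 - 2 / (real k + 2) + \<epsilon>) * real (OPT ns) - c"
proof -
  obtain l where kl: "k = 2 * l" using assms(2) by (auto elim: evenE)
  have l: "1 \<le> l" using assms(1) kl by simp
  have VA: "valid_algorithm (2*l) A" using assms(4) kl by simp
  define t0 where "t0 = nat \<lceil>c / \<epsilon>\<rceil> + 1"
  define T where "T = t0 + l * t0"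
  define R :: "nat set" where "R = {..<2*T}"
  have R: "{..<2*T} \<subseteq> R" "finite R" by (simp_all add: R_def)
  have inv: "\<forall>n\<le>T. Inv A R l n" using adv_inv[OF l VA R] by blast
  have S0: "sinv l t0 (fst (adv A R l t0)) (snd (adv A R l t0))"
    using inv by (simp add: Inv_def T_def)
  have "W l (snd (adv A R l t0)) \<le> l * t0" using W_bound[OF S0] .
  then obtain t' where t': "t0 \<le> t'" "t' \<le> t0 + l * t0" "quiet A R l t'"
    using quiet_exists[OF inv, of t0 "l * t0"] by (auto simp: T_def)
  obtain ns gs where ng: "adv A R l t' = (ns, gs)" by (cases "adv A R l t'")
  have I: "sinv l t' ns gs" "minv l ns gs (alg_out A R ns)"
    using inv t' ng by (auto simp: Inv_def T_def)
  have Q: "\<not> (\<exists>i<length gs. is_ready (alg_out A R ns) (gs ! i))"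
    using t'(3) ng by (simp add: quiet_def)
  have C1: "card (alg_out A R ns) * Suc l \<le> l * t'" and C2: "t' \<le> OPT ns"
    using final_count[OF l I Q] by auto
  have vi: "valid_instance R ns"
    unfolding valid_instance_def
  proof (intro conjI ballI)
    show "finite R" by (rule R(2))
    fix N assume "N \<in> set ns"
    then have "N \<subseteq> {..<2*t'}" using I(1) by (simp add: sinv_def)
    also have "\<dots> \<subseteq> {..<2*T}" using t' by (auto simp: T_def)
    finally show "N \<subseteq> R" by (simp add: R_def)
  qed
  have rho: "1 - 2 / (real k + 2) = real l / (real l + 1)"
    using kl l by (simp add: field_simps)
  have ct0: "c / \<epsilon> < real t0"
  proof -
    have "c / \<epsilon> \<le> real (nat \<lceil>c / \<epsilon>\<rceil>)" by linarith
    then show ?thesis by (simp add: t0_def)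
  qed
  have epsO: "c < \<epsilon> * real (OPT ns)"
  proof -
    have "c < \<epsilon> * real t0" using ct0 assms(3) by (simp add: field_simps)
    also have "\<dots> \<le> \<epsilon> * real (OPT ns)" using C2 t'(1) assms(3) by simp
    finally show ?thesis .
  qed
  have a1: "real (card (alg_out A R ns)) * (real l + 1) \<le> real l * real t'"
    using C1 by (metis of_nat_Suc of_nat_le_iff of_nat_mult add.commute)
  have a2: "real (card (alg_out A R ns)) \<le> real l / (real l + 1) * real (OPT ns)"
  proof -
    have "real (card (alg_out A R ns)) \<le> real l * real t' / (real l + 1)"
      using a1 by (simp add: field_simps)
    also have "\<dots> \<le> real l * real (OPT ns) / (real l + 1)"
      using C2 by (simp add: divide_right_mono mult_left_mono)
    finally show ?thesis by simp
  qed
  have "real (card (alg_out A R ns)) < (real l / (real l + 1) + \<epsilon>) * real (OPT ns) - c"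
    using a2 epsO by (simp add: algebra_simps)
  then show ?thesis using vi rho by auto
qed


end
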